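(* There exists a function $f\in\bigcap_{\alpha\in(0,1)}C^{0,\alpha}([0,1])$ which does not have the strong Sard property, i.e. $\mathcal{L}^1(f(S))>0$, but has the relaxed Sard property, i.e. $f_\#(\mathbf{1}_S\mathcal{L}^1)\perp\mathcal{L}^1$, where $S$ is the critical set of $f$.
   Context: $C^{0,\alpha}([0,1])$ is the space of $\alpha$-Hölder continuous real functions on $[0,1]$. $\mathcal{L}^1$ denotes Lebesgue measure on $\mathbb{R}$, $\mathbf{1}_A$ the indicator function of $A$, $f_\#\mu$ the pushforward of the measure $\mu$ under $f$, and $\mu\perp\nu$ means mutual singularity. The critical set $S$ of $f$ is the set of all points $x\in[0,1]$ at which $f$ is either not differentiable or has $f'(x)=0$. *)

theory Defs
  imports "HOL-Analysis.Analysis"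
begin

definition holder_01 :: "real \<Rightarrow> (real \<Rightarrow> real) \<Rightarrow> bool" where
  "holder_01 \<alpha> f \<longleftrightarrow> (\<exists>C. \<forall>x\<in>{0..1}. \<forall>y\<in>{0..1}. \<bar>f x - f y\<bar> \<le> C * \<bar>x - y\<bar> powr \<alpha>)"

definition critical_set :: "(real \<Rightarrow> real) \<Rightarrow> real set" where
  "critical_set f = {x\<in>{0..1}. \<not> (\<exists>D. (f has_real_derivative D) (at x within {0..1}))
                         \<or> (f has_real_derivative 0) (at x within {0..1})}"

definition mutually_singular :: "real measure \<Rightarrow> real measure \<Rightarrow> bool" where
  "mutually_singular \<mu> \<nu> \<longleftrightarrow>
     (\<exists>A\<in>sets borel. emeasure \<mu> A = 0 \<and> emeasure \<nu> (UNIV - A) = 0)"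

end

theory Submission
  imports Defs "HOL-Real_Asymp.Real_Asymp"
begin


definition u :: "nat \<Rightarrow> real" where "u n = 1 / ((real n + 1) * (real n + 2))"

definition J :: "real \<Rightarrow> real" where
  "J t = (\<Sum>n. u n * (of_int \<lfloor>2^n * (t::real)\<rfloor> / 2^n))"

lemma u_pos: "u n > 0" by (simp add: u_def)

lemma u_tail: "(\<lambda>m. u (m + N)) sums (1 / (real N + 1))"
proof -
  have "(\<lambda>n. 1 / (real (n + N) + 1)) \<longlonglongrightarrow> 0"
    by real_asymp
  from telescope_sums'[OF this]
  have "(\<lambda>n. 1 / (real (n + N) + 1) - 1 / (real (Suc n + N) + 1)) sums (1 / (real N + 1) - 0)"
    by simp
  moreover have "\<And>n. 1 / (real (n + N) + 1) - 1 / (real (Suc n + N) + 1) = u (n + N)"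
    by (simp add: u_def field_simps)
  ultimately show ?thesis by simp
qed

lemma u_sums: "u sums 1"
  using u_tail[of 0] by simp

lemma u_summable: "summable u" using u_sums by (auto simp: sums_iff)

lemma floor_bounds:
  fixes t :: real
  assumes "0 \<le> t"
  shows "0 \<le> of_int \<lfloor>2^n * t\<rfloor> / (2::real)^n" "of_int \<lfloor>2^n * t\<rfloor> / (2::real)^n \<le> t"
proof -
  show "0 \<le> of_int \<lfloor>2^n * t\<rfloor> / (2::real)^n" using assms by simp
  have "of_int \<lfloor>2^n * t\<rfloor> \<le> 2^n * t" by simp
  then show "of_int \<lfloor>2^n * t\<rfloor> / (2::real)^n \<le> t" by (simp add: divide_simps mult.commute)
qed

lemma J_summable:
  fixes t :: real
  assumes "0 \<le> t" "t \<le> 1"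
  shows "summable (\<lambda>n. u n * (of_int \<lfloor>2^n * t\<rfloor> / 2^n))"
proof (rule summable_comparison_test'[OF u_summable])
  fix n
  have un: "0 \<le> u n" using u_pos[of n] by simp
  define q where "q = of_int \<lfloor>2^n * t\<rfloor> / (2::real)^n"
  have q: "0 \<le> q" "q \<le> 1" using floor_bounds[OF assms(1), of n] assms unfolding q_def[symmetric] by auto
  have "u n * q \<le> u n * 1" using un q by (intro mult_left_mono) auto
  then show "norm (u n * (of_int \<lfloor>2^n * t\<rfloor> / 2^n)) \<le> u n"
    using un q unfolding q_def[symmetric] by simp
qed

lemma J_diff:
  fixes s t :: real
  assumes "0 \<le> s" "s \<le> 1" "0 \<le> t" "t \<le> 1"
  shows "J t - J s = (\<Sum>n. u n * (of_int (\<lfloor>2^n * t\<rfloor> - \<lfloor>2^n * s\<rfloor>) / 2^n))"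
  unfolding J_def
  by (subst suminf_diff[OF J_summable J_summable]) (use assms in \<open>auto simp: algebra_simps diff_divide_distrib\<close>)

lemma diff_summable:
  fixes s t :: real
  assumes "0 \<le> s" "s \<le> 1" "0 \<le> t" "t \<le> 1"
  shows "summable (\<lambda>n. u n * (of_int (\<lfloor>2^n * t\<rfloor> - \<lfloor>2^n * s\<rfloor>) / 2^n))"
  using summable_diff[OF J_summable[of t] J_summable[of s]] assms
  by (simp add: algebra_simps diff_divide_distrib)

lemma J_gap:
  assumes "0 \<le> s" "s \<le> 1" "0 \<le> t" "t \<le> 1" "1 / 2^N \<le> t - s"
  shows "u N / 2^N \<le> J t - J s"
proof -
  have st: "s \<le> t" using assms(5) by (smt (verit) divide_nonneg_pos zero_less_power)
  have nn: "0 \<le> u n * (of_int (\<lfloor>2^n * t\<rfloor> - \<lfloor>2^n * s\<rfloor>) / 2^n)" for n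
  proof -
    have "\<lfloor>2^n * s\<rfloor> \<le> \<lfloor>2^n * t\<rfloor>" using st by (intro floor_mono) simp
    then show ?thesis using u_pos[of n] by simp
  qed
  have "2^N * s + 1 \<le> 2^N * t" using assms(5) by (simp add: field_simps)
  then have "\<lfloor>2^N * s\<rfloor> + 1 \<le> \<lfloor>2^N * t\<rfloor>"
    by (metis floor_add_int floor_mono of_int_1)
  then have "u N / 2^N \<le> u N * (of_int (\<lfloor>2^N * t\<rfloor> - \<lfloor>2^N * s\<rfloor>) / 2^N)"
    using u_pos[of N] by (simp add: divide_right_mono)
  also have "\<dots> \<le> (\<Sum>n. u n * (of_int (\<lfloor>2^n * t\<rfloor> - \<lfloor>2^n * s\<rfloor>) / 2^n))"
    using sum_le_suminf[OF diff_summable[OF assms(1-4)], of "{N}"] nn by simp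
  finally show ?thesis using J_diff[OF assms(1-4)] by simp
qed

lemma J_mono:
  assumes "0 \<le> s" "s \<le> t" "t \<le> 1"
  shows "J s \<le> J t"
proof -
  have nn: "0 \<le> u n * (of_int (\<lfloor>2^n * t\<rfloor> - \<lfloor>2^n * s\<rfloor>) / 2^n)" for n
  proof -
    have "\<lfloor>2^n * s\<rfloor> \<le> \<lfloor>2^n * t\<rfloor>" using assms by (intro floor_mono) simp
    then show ?thesis using u_pos[of n] by simp
  qed
  have "0 \<le> (\<Sum>n. u n * (of_int (\<lfloor>2^n * t\<rfloor> - \<lfloor>2^n * s\<rfloor>) / 2^n))"
    by (rule suminf_nonneg[OF diff_summable]) (use assms nn in auto)
  then show ?thesis using J_diff[of s t] assms by simp
qed

lemma J_strict:
  assumes "0 \<le> s" "s < t" "t \<le> 1"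
  shows "J s < J t"
proof -
  obtain N where "(1/2::real)^N < t - s" using real_arch_pow_inv[of "t - s" "1/2"] assms by auto
  then have "1 / 2^N \<le> t - s" by (simp add: power_one_over)
  from J_gap[OF _ _ _ _ this] assms have "u N / 2^N \<le> J t - J s" by auto
  moreover have "0 < u N / 2^N" using u_pos by simp
  ultimately show ?thesis by simp
qed

lemma J_range:
  assumes "0 \<le> t" "t \<le> 1"
  shows "0 \<le> J t" "J t \<le> t"
proof -
  have s: "summable (\<lambda>n. u n * (of_int \<lfloor>2^n * t\<rfloor> / 2^n))" using J_summable assms .
  show "0 \<le> J t" unfolding J_def
    by (rule suminf_nonneg[OF s]) (metis floor_bounds(1)[OF assms(1)] u_pos less_imp_le mult_nonneg_nonneg)
  have "J t \<le> (\<Sum>n. u n * t)" unfolding J_def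
  proof (rule suminf_le[OF _ s])
    show "summable (\<lambda>n. u n * t)" by (intro summable_mult2 u_summable)
    fix n show "u n * (of_int \<lfloor>2^n * t\<rfloor> / 2^n) \<le> u n * t"
      by (rule mult_left_mono[OF floor_bounds(2)[OF assms(1)]]) (use u_pos[of n] in simp)
  qed
  also have "\<dots> = t" using sums_unique[OF sums_mult2[OF u_sums, of t]] by simp
  finally show "J t \<le> t" .
qed

lemma floor_step_small:
  fixes t :: real
  assumes "m \<le> N"
  shows "\<lfloor>2^m * t\<rfloor> \<le> \<lfloor>2^m * (of_int \<lfloor>2^N * t\<rfloor> / 2^N :: real)\<rfloor>"
proof -
  define j where "j = \<lfloor>2^m * t\<rfloor>"
  define k where "k = \<lfloor>2^N * t\<rfloor>"
  define p :: int where "p = 2^(N-m)"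
  have pN: "(2::real)^N = 2^m * of_int p" using assms by (simp add: p_def flip: power_add)
  have pp: "0 < p" by (simp add: p_def)
  have "of_int j \<le> 2^m * t" by (simp add: j_def)
  then have "of_int j * of_int p \<le> 2^m * t * of_int p" using pp by (intro mult_right_mono) auto
  also have "\<dots> = 2^N * t" using pN by simp
  finally have "of_int (j * p) \<le> 2^N * t" by simp
  then have "j * p \<le> k" by (simp add: k_def le_floor_iff)
  then have "of_int j * of_int p \<le> (of_int k :: real)" by (metis of_int_le_iff of_int_mult)
  then have "of_int j \<le> (of_int k :: real) / of_int p" using pp by (simp add: field_simps)
  also have "(of_int k :: real) / of_int p = 2^m * (of_int k / 2^N)" using pN pp by (simp add: field_simps)
  finally show ?thesis unfolding j_def[symmetric] k_def[symmetric] by (simp add: le_floor_iff)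
qed

lemma floor_step_large:
  fixes t :: real
  assumes "N \<le> m"
  shows "\<lfloor>2^m * t\<rfloor> - \<lfloor>2^m * (of_int \<lfloor>2^N * t\<rfloor> / 2^N :: real)\<rfloor> \<le> 2^(m-N)"
proof -
  define k where "k = \<lfloor>2^N * t\<rfloor>"
  define p :: int where "p = 2^(m-N)"
  have pN: "(2::real)^m = 2^N * of_int p" using assms by (simp add: p_def flip: power_add)
  have pp: "0 < p" by (simp add: p_def)
  have e: "2^m * (of_int k / 2^N) = (of_int (k * p) :: real)" using pN by simp
  have "2^N * t < of_int k + 1" by (simp add: k_def)
  then have "2^N * t * of_int p < (of_int k + 1) * of_int p" using pp by (intro mult_strict_right_mono) auto
  then have "2^m * t < of_int ((k + 1) * p)" using pN by (simp add: algebra_simps)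
  then have "\<lfloor>2^m * t\<rfloor> < (k + 1) * p" by (simp add: floor_less_iff)
  moreover have "\<lfloor>(of_int (k * p) :: real)\<rfloor> = k * p" by (rule floor_of_int)
  ultimately show ?thesis unfolding k_def[symmetric] e p_def[symmetric] by (simp add: algebra_simps)
qed

lemma J_cover:
  fixes t :: real and N :: nat
  assumes "0 \<le> t" "t \<le> 1"
  defines "s \<equiv> of_int \<lfloor>2^N * t\<rfloor> / 2^N"
  shows "0 \<le> s" "s \<le> t" "J s \<le> J t" "J t - J s \<le> 1 / (2^N * (real N + 1))"
proof -
  show s0: "0 \<le> s" "s \<le> t" using floor_bounds[OF assms(1), of N] by (auto simp: s_def)
  show "J s \<le> J t" using J_mono s0 assms by auto
  define g where "g m = (if m < N then 0 else u m / 2^N)" for m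
  have "(\<lambda>i. g (i + N)) sums ((1 / (real N + 1)) / 2^N)"
    unfolding g_def using sums_divide[OF u_tail[of N], of "2^N"] by simp
  then have gs: "g sums ((1 / (real N + 1)) / 2^N)"
    by (subst (asm) sums_iff_shift) (simp add: g_def)
  have le: "u m * (of_int (\<lfloor>2^m * t\<rfloor> - \<lfloor>2^m * s\<rfloor>) / 2^m) \<le> g m" for m
  proof (cases "m < N")
    case True
    have "\<lfloor>2^m * t\<rfloor> \<le> \<lfloor>2^m * s\<rfloor>" unfolding s_def using True by (intro floor_step_small) simp
    then show ?thesis using True u_pos[of m] by (simp add: g_def mult_nonneg_nonpos divide_nonpos_pos)
  next
    case False
    have d: "of_int (\<lfloor>2^m * t\<rfloor> - \<lfloor>2^m * s\<rfloor>) \<le> (2::real)^(m-N)"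
      using floor_step_large[of N m t] False unfolding s_def by (metis not_less of_int_le_iff of_int_numeral of_int_power)
    have "u m * (of_int (\<lfloor>2^m * t\<rfloor> - \<lfloor>2^m * s\<rfloor>) / 2^m) \<le> u m * (2^(m-N) / 2^m)"
      using u_pos[of m] d by (intro mult_left_mono divide_right_mono) auto
    also have "(2::real)^(m-N) / 2^m = 1 / 2^N" using False
      by (simp add: field_simps flip: power_add)
    finally show ?thesis using False by (simp add: g_def)
  qed
  have "J t - J s = (\<Sum>n. u n * (of_int (\<lfloor>2^n * t\<rfloor> - \<lfloor>2^n * s\<rfloor>) / 2^n))"
    using J_diff[OF s0(1) _ assms(1,2)] s0 assms(1,2) by simp
  also have "\<dots> \<le> suminf g"
    by (rule suminf_le[OF le diff_summable[of s t] sums_summable[OF gs]]) (use s0 assms(1,2) in linarith)+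
  also have "\<dots> = 1 / (2^N * (real N + 1))" using sums_unique[OF gs] by (simp add: mult.commute)
  finally show "J t - J s \<le> 1 / (2^N * (real N + 1))" .
qed



definition F :: "real \<Rightarrow> real" where
  "F x = Sup (insert 0 {t\<in>{0..1}. J t \<le> x})"

lemma F_bdd: "bdd_above (insert 0 {t\<in>{0..1}. J t \<le> x})"
  by (rule bdd_aboveI[of _ 1]) auto

lemma F_range: "0 \<le> F x" "F x \<le> 1"
  unfolding F_def
  by (rule cSup_upper[OF _ F_bdd], simp) (auto intro!: cSup_least)

lemma F_mono: "x \<le> y \<Longrightarrow> F x \<le> F y"
  unfolding F_def
  by (rule cSup_subset_mono[OF _ F_bdd]) auto

lemma F_J:
  assumes "0 \<le> t" "t \<le> 1"
  shows "F (J t) = t"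
proof -
  have "insert 0 {\<tau>\<in>{0..1}. J \<tau> \<le> J t} = {0..t}"
  proof (intro set_eqI iffI)
    fix \<tau> assume "\<tau> \<in> insert 0 {\<tau>\<in>{0..1}. J \<tau> \<le> J t}"
    then show "\<tau> \<in> {0..t}" using J_strict[of t \<tau>] assms by (auto simp: not_le[symmetric])
  next
    fix \<tau> assume "\<tau> \<in> {0..t}"
    then show "\<tau> \<in> insert 0 {\<tau>\<in>{0..1}. J \<tau> \<le> J t}" using J_mono[of \<tau> t] assms by auto
  qed
  then show ?thesis unfolding F_def using assms by simp
qed

lemma F_mod_aux:
  assumes "x \<le> y" "y - x \<le> u n / 2^n"
  shows "F y - F x \<le> 1 / 2^n"
proof (rule ccontr)
  assume "\<not> ?thesis"
  then have gt: "F y - F x > 1 / 2^n" by simp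
  define a where "a = F x"
  define b where "b = F y"
  define \<delta> where "\<delta> = (b - a - 1/2^n) / 2"
  have dpos: "\<delta> > 0" using gt by (simp add: \<delta>_def a_def b_def)
  define s where "s = a + \<delta>"
  define t where "t = s + 1 / 2^n"
  have a01: "0 \<le> a" "a \<le> 1" "0 \<le> b" "b \<le> 1" using F_range by (auto simp: a_def b_def)
  have tb: "t = b - \<delta>" by (simp add: t_def s_def \<delta>_def field_simps)
  have p2: "0 < 1/(2::real)^n" by simp
  have s01: "0 \<le> s" "s \<le> 1" "0 \<le> t" "t \<le> 1" using a01 dpos tb p2
    unfolding s_def t_def by linarith+
  have Js: "J s > x"
  proof (rule ccontr)
    assume "\<not> J s > x"
    then have "s \<in> insert 0 {t\<in>{0..1}. J t \<le> x}" using s01 by auto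
    then have "s \<le> a" unfolding a_def F_def by (rule cSup_upper[OF _ F_bdd])
    then show False using dpos by (simp add: s_def)
  qed
  have "t < b" using tb dpos by simp
  then obtain \<tau> where \<tau>: "\<tau> \<in> insert 0 {t\<in>{0..1}. J t \<le> y}" "t < \<tau>"
    unfolding b_def F_def using less_cSup_iff[OF _ F_bdd] by blast
  have "t > 0" using s01 dpos by (simp add: t_def add_nonneg_pos)
  then have "\<tau> \<noteq> 0" using \<tau> by auto
  then have \<tau>1: "\<tau> \<in> {0..1}" "J \<tau> \<le> y" using \<tau> by auto
  have "J t \<le> J \<tau>" using J_mono[of t \<tau>] \<tau> \<tau>1 s01 by auto
  have "u n / 2^n \<le> J t - J s" using J_gap[of s t n] s01 by (simp add: t_def)
  then have "u n / 2^n < y - x" using Js \<open>J t \<le> J \<tau>\<close> \<tau>1 by linarith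
  then show False using assms by simp
qed

lemma F_mod:
  assumes "\<bar>y - x\<bar> \<le> u n / 2^n"
  shows "\<bar>F y - F x\<bar> \<le> 1 / 2^n"
proof (cases "x \<le> y")
  case True
  then show ?thesis using F_mod_aux[of x y n] F_mono[of x y] assms by auto
next
  case False
  then show ?thesis using F_mod_aux[of y x n] F_mono[of y x] assms by auto
qed

lemma F_const_aux:
  assumes "x \<le> y" "\<forall>t\<in>{0..1}. J t \<notin> {x..y}"
  shows "F x = F y"
proof -
  have "{t\<in>{0..1}. J t \<le> x} = {t\<in>{0..1}. J t \<le> y}"
    using assms by force
  then show ?thesis by (simp add: F_def)
qed

lemma F_const:
  assumes "\<forall>t\<in>{0..1}. J t \<notin> closed_segment x y"
  shows "F x = F y"
proof (cases "x \<le> y")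
  case True
  then show ?thesis using F_const_aux[of x y] assms by (simp add: closed_segment_eq_real_ivl)
next
  case False
  then show ?thesis using F_const_aux[of y x] assms by (simp add: closed_segment_eq_real_ivl)
qed



lemma psi_bound:
  assumes "0 < \<alpha>" "\<alpha> < 1"
  shows "\<exists>K. \<forall>n. 2 * (1/2)^n \<le> K * (u n / 2^n) powr \<alpha>"
proof -
  define g where "g n = (real n + 2)^2 * 2 powr (- (1 - \<alpha>) * real n)" for n
  define b where "b = 1 - \<alpha>"
  have b0: "0 < b" using assms by (simp add: b_def)
  have "g \<longlonglongrightarrow> 0" unfolding g_def b_def[symmetric] using b0 by real_asymp
  then have "Bseq g" by (intro convergent_imp_Bseq convergentI)
  then obtain K where K': "\<forall>n. norm (g n) \<le> K" by (meson BseqE)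
  have K: "norm (g n) \<le> K" for n using K' by blast
  have "2 * (1/2)^n \<le> (2 * K) * (u n / 2^n) powr \<alpha>" for n
  proof -
    define P where "P = (real n + 1) * (real n + 2)"
    have a1: "1 \<le> real n + 1" "1 \<le> real n + 2" by auto
    have "1 * 1 \<le> (real n + 1) * (real n + 2)" by (rule mult_mono) (use a1 in auto)
    then have P1: "1 \<le> P" unfolding P_def by simp
    have p2: "2 powr (- real n) = 1 / (2::real)^n" by (simp add: powr_minus_divide powr_realpow)
    have psi: "u n / 2^n = 2 powr (- real n) / P"
      unfolding p2 by (simp add: u_def P_def)
    have "(u n / 2^n) powr \<alpha> = 2 powr (- real n * \<alpha>) / P powr \<alpha>"
      unfolding psi powr_divide powr_powr by simp
    have Pa: "0 < P powr \<alpha>" "P powr \<alpha> \<le> (real n + 2)^2"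
    proof -
      show "0 < P powr \<alpha>" using P1 by simp
      have "P powr \<alpha> \<le> P powr 1" using P1 assms by (intro powr_mono) auto
      also have "\<dots> \<le> (real n + 2)^2" using P1 by (simp add: P_def power2_eq_square)
      finally show "P powr \<alpha> \<le> (real n + 2)^2" .
    qed
    have "g n * (u n / 2^n) powr \<alpha> = (real n + 2)^2 / P powr \<alpha> * (2 powr (- (1 - \<alpha>) * real n) * 2 powr (- real n * \<alpha>))"
      unfolding \<open>(u n / 2^n) powr \<alpha> = _\<close> g_def by simp
    also have "2 powr (- (1 - \<alpha>) * real n) * 2 powr (- real n * \<alpha>) = 2 powr (- real n)"
      by (simp add: powr_add[symmetric] algebra_simps)
    also have "2 powr (- real n) = (1/2::real)^n"
      by (simp add: powr_minus_divide powr_realpow power_one_over)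
    finally have eq: "g n * (u n / 2^n) powr \<alpha> = (real n + 2)^2 / P powr \<alpha> * (1/2)^n" .
    have "1 \<le> (real n + 2)^2 / P powr \<alpha>" using Pa by simp
    then have "1 * (1/2::real)^n \<le> (real n + 2)^2 / P powr \<alpha> * (1/2)^n"
      by (intro mult_right_mono) auto
    then have "(1/2::real)^n \<le> (real n + 2)^2 / P powr \<alpha> * (1/2)^n"
      by (simp only: mult_1_left)
    also have "\<dots> = g n * (u n / 2^n) powr \<alpha>" using eq by simp
    also have "\<dots> \<le> K * (u n / 2^n) powr \<alpha>"
      using K[of n] by (intro mult_right_mono) auto
    finally show ?thesis by simp
  qed
  then show ?thesis by blast
qed

lemma psi_tendsto: "(\<lambda>n. u n / 2^n) \<longlonglongrightarrow> 0"
  unfolding u_def by real_asymp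

lemma F_holder:
  assumes "0 < \<alpha>" "\<alpha> < 1"
  shows "holder_01 \<alpha> F"
proof -
  obtain K where K: "\<And>n. 2 * (1/2)^n \<le> K * (u n / 2^n) powr \<alpha>" using psi_bound[OF assms] by blast
  have K0: "0 \<le> K"
  proof (rule ccontr)
    assume "\<not> 0 \<le> K"
    then have "K * (u 0 / 2^0) powr \<alpha> \<le> 0" by (intro mult_nonpos_nonneg) auto
    then show False using K[of 0] by simp
  qed
  have "\<forall>x\<in>{0..1}. \<forall>y\<in>{0..1}. \<bar>F x - F y\<bar> \<le> (2 + K) * \<bar>x - y\<bar> powr \<alpha>"
  proof (intro ballI)
    fix x y :: real assume xy: "x \<in> {0..1}" "y \<in> {0..1}"
    define d where "d = \<bar>x - y\<bar>"
    have d1: "d \<le> 1" using xy by (auto simp: d_def)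
    show "\<bar>F x - F y\<bar> \<le> (2 + K) * \<bar>x - y\<bar> powr \<alpha>"
    proof (cases "d = 0")
      case True then show ?thesis by (simp add: d_def)
    next
      case False
      then have dpos: "0 < d" by (simp add: d_def)
      show ?thesis
      proof (cases "d > u 0 / 2^0")
        case True
        then have "1/2 < d" by (simp add: u_def)
        have "d powr 1 \<le> d powr \<alpha>" using assms dpos d1 by (intro powr_mono') auto
        then have "d \<le> d powr \<alpha>" using dpos by simp
        moreover have "\<bar>F x - F y\<bar> \<le> 1" using F_range[of x] F_range[of y] by linarith
        moreover have "0 \<le> K * d powr \<alpha>" using K0 by simp
        ultimately show ?thesis unfolding d_def[symmetric] using \<open>1/2 < d\<close>
          by (simp add: distrib_right)
      next
        case False
        have "\<exists>n. u n / 2^n < d" using psi_tendsto dpos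
          by (metis LIMSEQ_le_const not_le)
        define n where "n = (LEAST n. u n / 2^n < d)"
        have n1: "u n / 2^n < d" unfolding n_def by (rule LeastI_ex) fact
        have "n \<noteq> 0"
        proof
          assume "n = 0" then show False using n1 False by simp
        qed
        then obtain m where m: "n = Suc m" by (cases n) auto
        have "\<not> u m / 2^m < d" using not_less_Least[of m "\<lambda>n. u n / 2^n < d"] m n_def by simp
        then have "\<bar>x - y\<bar> \<le> u m / 2^m" by (simp add: d_def)
        then have "\<bar>F x - F y\<bar> \<le> 1 / 2^m" using F_mod[of x y m] by (simp add: abs_minus_commute)
        also have "\<dots> = 2 * (1/2)^n" by (simp add: m power_one_over)
        also have "\<dots> \<le> K * (u n / 2^n) powr \<alpha>" by (rule K)
        also have "\<dots> \<le> K * d powr \<alpha>" using n1 K0 assms u_pos[of n]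
          by (intro mult_left_mono powr_mono2) auto
        also have "\<dots> \<le> (2 + K) * d powr \<alpha>" by (simp add: distrib_right)
        finally show ?thesis by (simp add: d_def)
      qed
    qed
  qed
  then show ?thesis unfolding holder_01_def by blast
qed

lemma F_cont: "continuous_on UNIV F"
proof (rule uniformly_continuous_imp_continuous)
  show "uniformly_continuous_on UNIV F"
    unfolding uniformly_continuous_on_def
  proof (intro allI impI)
    fix e :: real assume "0 < e"
    then obtain n where n: "(1/2::real)^n < e" using real_arch_pow_inv[of e "1/2"] by auto
    have "0 < u n / 2^n" using u_pos by simp
    moreover have "\<forall>x\<in>UNIV. \<forall>x'\<in>UNIV. dist x' x < u n / 2^n \<longrightarrow> dist (F x') (F x) < e"
    proof (intro ballI impI)
      fix x x' :: real assume "dist x' x < u n / 2^n"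
      then have "\<bar>F x' - F x\<bar> \<le> 1/2^n" using F_mod[of x' x n] by (simp add: dist_real_def)
      then show "dist (F x') (F x) < e" using n by (simp add: dist_real_def power_one_over)
    qed
    ultimately show "\<exists>d>0. \<forall>x\<in>UNIV. \<forall>x'\<in>UNIV. dist x' x < d \<longrightarrow> dist (F x') (F x) < e" by blast
  qed
qed



lemma K_negligible: "negligible (closure (J ` {0..1}))"
proof (subst negligible_outer_le, intro allI impI)
  fix e :: real assume e: "0 < e"
  obtain N :: nat where N: "2 / e < real N" using reals_Archimedean2 by blast
  have "2 / e < real N + 1" using N by simp
  then have Ne: "2 / (real N + 1) < e" using e by (simp add: divide_less_eq mult.commute)
  define \<delta> where "\<delta> = 1 / (2^N * (real N + 1))"
  define I where "I k = {J (real k / 2^N) .. J (real k / 2^N) + \<delta>}" for k :: nat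
  define T where "T = (\<Union>k\<in>{..2^N}. I k)"
  have cT: "compact T" unfolding T_def I_def by (intro compact_UN) auto
  have sub: "J ` {0..1} \<subseteq> T"
  proof
    fix y assume "y \<in> J ` {0..1}"
    then obtain t where t: "t \<in> {0..1}" "y = J t" by auto
    define s where "s = of_int \<lfloor>2^N * t\<rfloor> / (2::real)^N"
    have c: "0 \<le> s" "s \<le> t" "J s \<le> J t" "J t - J s \<le> \<delta>"
      using J_cover[of t N] t unfolding s_def \<delta>_def by auto
    define k where "k = nat \<lfloor>2^N * t\<rfloor>"
    have fl0: "0 \<le> \<lfloor>2^N * t\<rfloor>" using t by simp
    have rk: "real k = of_int \<lfloor>2^N * t\<rfloor>" using fl0 by (simp add: k_def)
    have sk: "s = real k / 2^N" by (simp add: s_def rk)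
    have "real k \<le> t * 2^N" using c(2) by (simp add: sk divide_le_eq)
    also have "\<dots> \<le> 1 * 2^N" using t(1) by (intro mult_right_mono) auto
    finally have "real k \<le> real (2^N)" by simp
    then have "k \<le> 2^N" by (simp only: of_nat_le_iff)
    moreover have "y \<in> I k" using c t unfolding I_def sk[symmetric] by auto
    ultimately show "y \<in> T" unfolding T_def by auto
  qed
  have "closure (J ` {0..1}) \<subseteq> T"
    by (rule closure_minimal[OF sub compact_imp_closed[OF cT]])
  moreover have "T \<in> lmeasurable" using cT by (rule lmeasurable_compact)
  moreover have "measure lebesgue T \<le> e"
  proof -
    have "measure lebesgue T \<le> (\<Sum>k\<in>{..2^N}. measure lebesgue (I k))"
      unfolding T_def by (rule measure_UNION_le) (auto simp: I_def)
    also have "\<dots> = (\<Sum>k\<in>{..(2::nat)^N}. \<delta>)"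
      by (intro sum.cong refl) (simp add: I_def \<delta>_def)
    also have "\<dots> = (2^N + 1) * \<delta>" by simp
    also have "\<dots> \<le> 2 / (real N + 1)"
    proof -
      have "(2::real)^N + 1 \<le> 2 * 2^N" by simp
      then have "((2::real)^N + 1) / (2^N * (real N + 1)) \<le> (2 * 2^N) / (2^N * (real N + 1))"
        by (intro divide_right_mono) auto
      then show ?thesis by (simp add: \<delta>_def)
    qed
    finally show ?thesis using Ne by simp
  qed
  ultimately show "\<exists>T. closure (J ` {0..1}) \<subseteq> T \<and> T \<in> lmeasurable \<and> measure lebesgue T \<le> e"
    by blast
qed

lemma K_outside:
  assumes "x \<notin> closure (J ` {0..1})"
  obtains e where "0 < e" "\<And>y. y \<in> ball x e \<Longrightarrow> F y = F x"
proof -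
  have op: "open (- closure (J ` {0..1}))" by (rule open_Compl) (rule closed_closure)
  have xin: "x \<in> - closure (J ` {0..1})" using assms by simp
  obtain e where e: "0 < e" "ball x e \<subseteq> - closure (J ` {0..1})"
    using openE[OF op xin] by metis
  have "F y = F x" if y: "y \<in> ball x e" for y
  proof -
    have seg: "closed_segment y x \<subseteq> ball x e"
      by (rule closed_segment_subset[OF y _ convex_ball]) (simp add: e(1))
    have "\<forall>t\<in>{0..1}. J t \<notin> closed_segment y x"
    proof (intro ballI notI)
      fix t :: real assume t: "t \<in> {0..1}" and jt: "J t \<in> closed_segment y x"
      have "J t \<in> ball x e" using seg jt by (rule subsetD)
      moreover have "J t \<in> J ` {0..1}" using t by simp
      then have "J t \<in> closure (J ` {0..1})" by (rule closure_subset[THEN subsetD])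
      ultimately show False using e(2) by (auto dest: subsetD)
    qed
    then show ?thesis by (rule F_const)
  qed
  then show ?thesis by (rule that[OF e(1)])
qed

lemma K_deriv:
  assumes "x \<notin> closure (J ` {0..1})"
  shows "(F has_real_derivative 0) (at x)"
proof -
  obtain e where e: "0 < e" "\<And>y. y \<in> ball x e \<Longrightarrow> F y = F x" using K_outside[OF assms] by metis
  have d: "((\<lambda>_. F x) has_real_derivative 0) (at x)" by (rule DERIV_const)
  show ?thesis
  proof (rule has_field_derivative_transform_within_open[OF d, where S = "ball x e"])
    show "open (ball x e)" by (rule open_ball)
    show "x \<in> ball x e" using e(1) by simp
    show "\<And>y. y \<in> ball x e \<Longrightarrow> F x = F y" using e(2) by metis
  qed
qed

lemma K_rat:
  assumes "x \<notin> closure (J ` {0..1})"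
  shows "F x \<in> F ` \<rat>"
proof -
  obtain e where e: "0 < e" "\<And>y. y \<in> ball x e \<Longrightarrow> F y = F x" using K_outside[OF assms] by metis
  have "x < x + e" using e by simp
  from Rats_dense_in_real[OF this] obtain r where r: "r \<in> \<rat>" "x < r" "r < x + e" by blast
  have "r \<in> ball x e" using r by (simp add: dist_real_def)
  then have "F x = F r" using e(2) by metis
  then show ?thesis using r(1) by (rule image_eqI)
qed

lemma F_meas: "F \<in> borel_measurable lebesgue"
  by (rule measurable_completion) (simp add: borel_measurable_continuous_onI F_cont)

theorem theorem4:
  shows "\<exists>f :: real \<Rightarrow> real.
     continuous_on UNIV f \<and>
     (\<forall>\<alpha>. 0 < \<alpha> \<and> \<alpha> < 1 \<longrightarrow> holder_01 \<alpha> f) \<and>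
     critical_set f \<in> sets lebesgue \<and>
     f ` critical_set f \<in> sets lebesgue \<and>
     emeasure lebesgue (f ` critical_set f) > 0 \<and>
     mutually_singular (distr (density lebesgue (indicator (critical_set f))) borel f) lborel"
proof (rule exI[of _ F], intro conjI allI impI)
  define K where "K = closure (J ` {0..1})"
  define S where "S = critical_set F"
  have Kneg: "negligible K" unfolding K_def by (rule K_negligible)
  have Knull: "K \<in> null_sets lebesgue" using Kneg by (simp add: negligible_iff_null_sets)
  have S01: "S \<subseteq> {0..1}" by (auto simp: S_def critical_set_def)
  have SK: "{0..1} - K \<subseteq> S"
  proof
    fix x assume x: "x \<in> {0..1} - K"
    then have "(F has_real_derivative 0) (at x)" using K_deriv by (simp add: K_def)
    then have "(F has_real_derivative 0) (at x within {0..1})" by (rule has_field_derivative_at_within)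
    then show "x \<in> S" using x by (simp add: S_def critical_set_def)
  qed
  define E where "E = {0..1} - S"
  have EK: "E \<subseteq> K" using SK by (auto simp: E_def)
  have Eneg: "negligible E" using negligible_subset[OF Kneg EK] .
  have Ediff: "F differentiable_on E"
    unfolding differentiable_on_def
  proof
    fix x assume x: "x \<in> E"
    then obtain D where D: "(F has_real_derivative D) (at x within {0..1})"
      by (auto simp: E_def S_def critical_set_def)
    have "F differentiable (at x within {0..1})"
      by (rule differentiableI[OF has_field_derivative_imp_has_derivative[OF D]])
    then show "F differentiable (at x within E)"
      by (rule differentiable_within_subset) (auto simp: E_def)
  qed
  have nFE: "negligible (F ` E)"
    by (rule negligible_differentiable_image_negligible[OF _ Eneg Ediff]) simp
  have FEnull: "F ` E \<in> null_sets lebesgue" using nFE by (simp add: negligible_iff_null_sets)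
  have cover: "{0..1} \<subseteq> F ` S \<union> F ` E"
  proof
    fix y :: real assume y: "y \<in> {0..1}"
    have Jy: "J y \<in> {0..1}" using J_range[of y] y by auto
    have "F (J y) = y" using F_J y by auto
    then show "y \<in> F ` S \<union> F ` E" using Jy by (cases "J y \<in> S") (auto simp: E_def intro: image_eqI[where x = "J y"])
  qed
  have FS01: "F ` S \<subseteq> {0..1}" using F_range by auto
  have eqFS: "F ` S = ({0..1} - F ` E) \<union> (F ` S \<inter> F ` E)" using cover FS01 by blast
  have m1: "{0..1} - F ` E \<in> sets lebesgue"
    using negligible_imp_sets[OF nFE] by (intro sets.Diff) auto
  have m2: "F ` S \<inter> F ` E \<in> sets lebesgue"
    by (rule negligible_imp_sets[OF negligible_subset[OF nFE]]) auto
  have FSmeas: "F ` S \<in> sets lebesgue" by (subst eqFS) (rule sets.Un[OF m1 m2])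
  have Smeas: "S \<in> sets lebesgue"
  proof -
    have eqS: "S = ({0..1} - K) \<union> (S \<inter> K)" using SK S01 by blast
    have mA: "{0..1} - K \<in> sets lebesgue" using negligible_imp_sets[OF Kneg] by (intro sets.Diff) auto
    have mB: "S \<inter> K \<in> sets lebesgue"
      by (rule negligible_imp_sets[OF negligible_subset[OF Kneg]]) auto
    show ?thesis by (subst eqS) (rule sets.Un[OF mA mB])
  qed
  have pos: "emeasure lebesgue (F ` S) > 0"
  proof -
    have "emeasure lebesgue {0..1::real} \<le> emeasure lebesgue (F ` S \<union> F ` E)"
      by (rule emeasure_mono[OF cover]) (use FSmeas negligible_imp_sets[OF nFE] in auto)
    also have "\<dots> \<le> emeasure lebesgue (F ` S) + emeasure lebesgue (F ` E)"
      by (rule emeasure_subadditive[OF FSmeas negligible_imp_sets[OF nFE]])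
    also have "emeasure lebesgue (F ` E) = 0" using FEnull by auto
    finally have "1 \<le> emeasure lebesgue (F ` S)" by simp
    then show ?thesis by (rule order.strict_trans2[OF zero_less_one])
  qed
  define Dset where "Dset = F ` ({0..1} - K)"
  have Dcount: "countable Dset"
  proof (rule countable_subset)
    show "Dset \<subseteq> F ` \<rat>" using K_rat by (auto simp: Dset_def K_def)
    show "countable (F ` \<rat>)" by (intro countable_image countable_rat)
  qed
  have Dnull: "Dset \<in> null_sets lborel" using Dcount by (rule countable_imp_null_set_lborel)
  have Dborel: "Dset \<in> sets borel" using null_setsD2[OF Dnull] by simp
  have Aborel: "UNIV - Dset \<in> sets borel" using Dborel by auto
  have Fmeas': "F \<in> measurable (density lebesgue (indicator S)) borel"
    using F_meas by simp
  have Smeasf: "(indicator S :: real \<Rightarrow> ennreal) \<in> borel_measurable lebesgue"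
    using Smeas by simp
  have Bmeas: "F -` (UNIV - Dset) \<in> sets lebesgue"
    using measurable_sets[OF F_meas Aborel] by simp
  have "emeasure (distr (density lebesgue (indicator S)) borel F) (UNIV - Dset)
      = emeasure (density lebesgue (indicator S)) (F -` (UNIV - Dset))"
    by (subst emeasure_distr[OF Fmeas' Aborel]) simp
  also have "\<dots> = (\<integral>\<^sup>+ x. indicator S x * indicator (F -` (UNIV - Dset)) x \<partial>lebesgue)"
    by (rule emeasure_density[OF Smeasf Bmeas])
  also have "\<dots> \<le> (\<integral>\<^sup>+ x. indicator K x \<partial>lebesgue)"
  proof (rule nn_integral_mono)
    fix x
    show "indicator S x * indicator (F -` (UNIV - Dset)) x \<le> (indicator K x :: ennreal)"
    proof (cases "x \<in> S \<and> F x \<notin> Dset \<and> x \<notin> K")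
      case True
      then have "x \<in> {0..1} - K" using S01 by auto
      then have "F x \<in> Dset" by (simp add: Dset_def)
      then show ?thesis using True by simp
    next
      case False
      then show ?thesis by (auto simp: indicator_def)
    qed
  qed
  also have "\<dots> = emeasure lebesgue K" by (rule nn_integral_indicator[OF null_setsD2[OF Knull]])
  also have "\<dots> = 0" using Knull by (rule null_setsD1)
  finally have z: "emeasure (distr (density lebesgue (indicator S)) borel F) (UNIV - Dset) = 0" by simp
  have "UNIV - (UNIV - Dset) = Dset" by blast
  then have z2: "emeasure lborel (UNIV - (UNIV - Dset)) = 0" using null_setsD1[OF Dnull] by simp
  show "mutually_singular (distr (density lebesgue (indicator (critical_set F))) borel F) lborel"
    unfolding mutually_singular_def S_def[symmetric] using Aborel z z2 by blast
  show "continuous_on UNIV F" by (rule F_cont)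
  show "holder_01 \<alpha> F" if "0 < \<alpha> \<and> \<alpha> < 1" for \<alpha> using F_holder that by blast
  show "critical_set F \<in> sets lebesgue" using Smeas by (simp add: S_def)
  show "F ` critical_set F \<in> sets lebesgue" using FSmeas by (simp add: S_def)
  show "emeasure lebesgue (F ` critical_set F) > 0" using pos by (simp add: S_def)
qed


end
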